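(* Let $A$ be an MV-algebra such that the set $\operatorname{Der}(A)$ of $(\odot,\vee)$-derivations on $A$ is closed under pointwise $\wedge$ (so that it is a lattice under pointwise $\vee,\wedge$). Then $\chi^{(A)}=\{\chi^{(u)}:u\in A\}$ is a filter of the lattice $\operatorname{Der}(A)$, i.e. it is nonempty, closed under $\wedge$, and if $\chi^{(u)}\preceq d$ with $d\in\operatorname{Der}(A)$ then $d\in\chi^{(A)}$; here $\chi^{(u)}(1)=u$ and $\chi^{(u)}(x)=x$ for $x\neq 1$.
   Context: An MV-algebra is an algebra $(A,\oplus,{}^*,0)$ of type $(2,1,0)$ satisfying: $x\oplus(y\oplus z)=(x\oplus y)\oplus z$, $x\oplus y=y\oplus x$, $x\oplus 0=x$, $x^{**}=x$, $x\oplus 0^*=0^*$, $(x^*\oplus y)^*\oplus y=(y^*\oplus x)^*\oplus x$. Put $1=0^*$ and $x\odot y=(x^*\oplus y^* )^*$. The natural order is $x\le y$ iff $x^*\oplus y=1$, with lattice operations $x\vee y=(x\odot y^* )\oplus y$, $x\wedge y=x\odot(x^*\oplus y)$. A $(\odot,\vee)$-derivation on $A$ is a map $d:A\to A$ with $d(x\odot y)=(d(x)\odot y)\vee(x\odot d(y))$ for all $x,y\in A$. Maps are ordered by $d\preceq d'$ iff $d(x)\le d'(x)$ for all $x$, with pointwise $\vee,\wedge$. *)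

theory Defs
  imports Main
begin

definition mv_algebra :: "('a \<Rightarrow> 'a \<Rightarrow> 'a) \<Rightarrow> ('a \<Rightarrow> 'a) \<Rightarrow> 'a \<Rightarrow> bool" where
  "mv_algebra opl st z \<longleftrightarrow>
     (\<forall>x y w. opl x (opl y w) = opl (opl x y) w) \<and>
     (\<forall>x y. opl x y = opl y x) \<and>
     (\<forall>x. opl x z = x) \<and>
     (\<forall>x. st (st x) = x) \<and>
     (\<forall>x. opl x (st z) = st z) \<and>
     (\<forall>x y. opl (st (opl (st x) y)) y = opl (st (opl (st y) x)) x)"

definition mv_one :: "('a \<Rightarrow> 'a) \<Rightarrow> 'a \<Rightarrow> 'a" where
  "mv_one st z = st z"

definition mv_odot :: "('a \<Rightarrow> 'a \<Rightarrow> 'a) \<Rightarrow> ('a \<Rightarrow> 'a) \<Rightarrow> 'a \<Rightarrow> 'a \<Rightarrow> 'a" where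
  "mv_odot opl st x y = st (opl (st x) (st y))"

definition mv_sup :: "('a \<Rightarrow> 'a \<Rightarrow> 'a) \<Rightarrow> ('a \<Rightarrow> 'a) \<Rightarrow> 'a \<Rightarrow> 'a \<Rightarrow> 'a" where
  "mv_sup opl st x y = opl (mv_odot opl st x (st y)) y"

definition mv_inf :: "('a \<Rightarrow> 'a \<Rightarrow> 'a) \<Rightarrow> ('a \<Rightarrow> 'a) \<Rightarrow> 'a \<Rightarrow> 'a \<Rightarrow> 'a" where
  "mv_inf opl st x y = mv_odot opl st x (opl (st x) y)"

definition mv_le :: "('a \<Rightarrow> 'a \<Rightarrow> 'a) \<Rightarrow> ('a \<Rightarrow> 'a) \<Rightarrow> 'a \<Rightarrow> 'a \<Rightarrow> 'a \<Rightarrow> bool" where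
  "mv_le opl st z x y \<longleftrightarrow> opl (st x) y = mv_one st z"

definition odot_sup_derivations :: "('a \<Rightarrow> 'a \<Rightarrow> 'a) \<Rightarrow> ('a \<Rightarrow> 'a) \<Rightarrow> ('a \<Rightarrow> 'a) set" where
  "odot_sup_derivations opl st =
     {d. \<forall>x y. d (mv_odot opl st x y) =
                mv_sup opl st (mv_odot opl st (d x) y) (mv_odot opl st x (d y))}"

definition der_le :: "('a \<Rightarrow> 'a \<Rightarrow> 'a) \<Rightarrow> ('a \<Rightarrow> 'a) \<Rightarrow> 'a \<Rightarrow> ('a \<Rightarrow> 'a) \<Rightarrow> ('a \<Rightarrow> 'a) \<Rightarrow> bool" where
  "der_le opl st z d d' \<longleftrightarrow> (\<forall>x. mv_le opl st z (d x) (d' x))"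

definition map_inf :: "('a \<Rightarrow> 'a \<Rightarrow> 'a) \<Rightarrow> ('a \<Rightarrow> 'a) \<Rightarrow> ('a \<Rightarrow> 'a) \<Rightarrow> ('a \<Rightarrow> 'a) \<Rightarrow> 'a \<Rightarrow> 'a" where
  "map_inf opl st d d' = (\<lambda>x. mv_inf opl st (d x) (d' x))"

definition chi :: "('a \<Rightarrow> 'a) \<Rightarrow> 'a \<Rightarrow> 'a \<Rightarrow> 'a \<Rightarrow> 'a" where
  "chi st z u = (\<lambda>x. if x = mv_one st z then u else x)"

definition chi_set :: "('a \<Rightarrow> 'a) \<Rightarrow> 'a \<Rightarrow> ('a \<Rightarrow> 'a) set" where
  "chi_set st z = {chi st z u | u. True}"

end

theory Submission
  imports Defs
begin

locale mvl =
  fixes opl :: "'a \<Rightarrow> 'a \<Rightarrow> 'a" and st :: "'a \<Rightarrow> 'a" and z :: 'a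
  assumes mv: "mv_algebra opl st z"
begin

lemma ax:
  "opl x (opl y w) = opl (opl x y) w"
  "opl x y = opl y x"
  "opl x z = x"
  "st (st x) = x"
  "opl x (st z) = st z"
  "opl (st (opl (st x) y)) y = opl (st (opl (st y) x)) x"
  using mv unfolding mv_algebra_def by blast+

lemma zx: "opl z x = x" using ax(2,3) by metis
lemma onex: "opl (st z) x = st z" using ax(2,5) by metis

lemma compl: "opl (st x) x = st z"
proof -
  have "opl (st (opl (st x) (st z))) (st z) = opl (st (opl (st (st z)) x)) x" by (rule ax(6))
  thus ?thesis by (simp add: ax(4,5) zx)
qed

lemma compl2: "opl x (st x) = st z" using compl ax(2) by metis

lemma sum0: "opl p q = z \<Longrightarrow> q = z"
proof -
  assume h: "opl p q = z"
  have "opl (st q) (opl p q) = opl p (opl (st q) q)" using ax(1,2) by metis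
  also have "\<dots> = st z" by (simp add: compl ax(5))
  finally have "st q = st z" using h ax(3) by simp
  thus ?thesis using ax(4) by metis
qed

lemma odot0: "mv_odot opl st x (st x) = z"
  unfolding mv_odot_def by (simp add: ax(4) compl)

lemma odot_one: "mv_odot opl st (st z) y = y" "mv_odot opl st y (st z) = y"
  unfolding mv_odot_def by (simp_all add: ax(4) zx ax(3))

lemma odot_zero: "mv_odot opl st z y = z" "mv_odot opl st y z = z"
  unfolding mv_odot_def using ax(4)[of z] by (simp_all add: onex ax(4) ax(5))

lemma sup_le: "mv_le opl st z a b \<Longrightarrow> mv_sup opl st a b = b"
  unfolding mv_le_def mv_sup_def mv_odot_def mv_one_def by (simp add: ax(4) zx)

lemma sup_comm: "mv_sup opl st a b = mv_sup opl st b a"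
  unfolding mv_sup_def mv_odot_def ax(4) by (rule ax(6))

lemma antisym: "mv_le opl st z a b \<Longrightarrow> mv_le opl st z b a \<Longrightarrow> a = b"
  using sup_le sup_comm by metis

lemma sup_idem: "mv_sup opl st a a = a"
  unfolding mv_sup_def by (simp add: odot0 zx)

lemma sup_zero: "mv_sup opl st a b = z \<Longrightarrow> a = z"
proof -
  assume h: "mv_sup opl st a b = z"
  hence "b = z" unfolding mv_sup_def by (rule sum0)
  with h show ?thesis unfolding mv_sup_def by (simp add: ax(3) odot_one)
qed

lemma odot_le: "mv_le opl st z (mv_odot opl st u y) y"
  unfolding mv_le_def mv_odot_def mv_one_def
  using ax(1) ax(4) compl onex by metis

lemma odot_le2: "mv_le opl st z (mv_odot opl st y u) y"
  using odot_le ax(2) unfolding mv_odot_def by metis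

lemma odot_ne1: "x \<noteq> st z \<Longrightarrow> mv_odot opl st x y \<noteq> st z"
proof
  assume "x \<noteq> st z" "mv_odot opl st x y = st z"
  hence "opl (st x) (st y) = z" unfolding mv_odot_def using ax(4) by metis
  hence "st y = z" "st x = z" using sum0 ax(2) by metis+
  hence "x = st z" using ax(4) by metis
  thus False using \<open>x \<noteq> st z\<close> by simp
qed

lemma inf_idem: "mv_inf opl st x x = x"
  unfolding mv_inf_def by (simp add: compl odot_one)

lemma der_le_self:
  assumes d: "d \<in> odot_sup_derivations opl st"
  shows "mv_le opl st z (d x) x"
proof -
  have D: "\<And>x y. d (mv_odot opl st x y) =
       mv_sup opl st (mv_odot opl st (d x) y) (mv_odot opl st x (d y))"
    using d unfolding odot_sup_derivations_def by blast
  have "d z = z" using D[of z z] by (metis odot_zero(1) odot_zero(2) sup_idem)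
  hence "mv_odot opl st (d x) (st x) = z" using D[of x "st x"] odot0 sup_zero by metis
  thus ?thesis unfolding mv_odot_def mv_le_def mv_one_def using ax(4) by metis
qed

lemma chi_der: "chi st z u \<in> odot_sup_derivations opl st"
  unfolding odot_sup_derivations_def
proof (intro CollectI allI)
  fix x y
  show "chi st z u (mv_odot opl st x y) =
        mv_sup opl st (mv_odot opl st (chi st z u x) y) (mv_odot opl st x (chi st z u y))"
  proof (cases "x = st z")
    case True
    then show ?thesis
    proof (cases "y = st z")
      case True
      then show ?thesis using \<open>x = st z\<close> by (simp add: chi_def mv_one_def odot_one sup_idem)
    next
      case False
      have "mv_odot opl st y (st z) \<noteq> st z" using odot_ne1[OF False] .
      hence "y \<noteq> st z" by (simp add: odot_one)
      then show ?thesis using \<open>x = st z\<close> False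
        by (simp add: chi_def mv_one_def odot_one sup_le odot_le)
    qed
  next
    case False
    then show ?thesis
    proof (cases "y = st z")
      case True
      then show ?thesis using False
        by (simp add: chi_def mv_one_def odot_one sup_le odot_le2 sup_comm[of x])
    next
      case F2: False
      then show ?thesis using False odot_ne1[OF False, of y]
        by (simp add: chi_def mv_one_def sup_idem)
    qed
  qed
qed

end

theorem proposition5p13:
  fixes opl :: "'a \<Rightarrow> 'a \<Rightarrow> 'a" and st :: "'a \<Rightarrow> 'a" and z :: 'a
  assumes mv: "mv_algebra opl st z"
    and inf_closed: "\<forall>d\<in>odot_sup_derivations opl st. \<forall>d'\<in>odot_sup_derivations opl st.
                        map_inf opl st d d' \<in> odot_sup_derivations opl st"
  shows "chi_set st z \<noteq> {} \<and>
         chi_set st z \<subseteq> odot_sup_derivations opl st \<and>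
         (\<forall>d\<in>chi_set st z. \<forall>d'\<in>chi_set st z. map_inf opl st d d' \<in> chi_set st z) \<and>
         (\<forall>u d. d \<in> odot_sup_derivations opl st \<and> der_le opl st z (chi st z u) d
                  \<longrightarrow> d \<in> chi_set st z)"
proof -
  interpret M: mvl opl st z using mv by unfold_locales
  have 1: "chi_set st z \<noteq> {}" unfolding chi_set_def by blast
  have 2: "chi_set st z \<subseteq> odot_sup_derivations opl st"
    unfolding chi_set_def using M.chi_der by blast
  have 3: "map_inf opl st d d' \<in> chi_set st z" if h3: "d \<in> chi_set st z" "d' \<in> chi_set st z" for d d'
  proof -
    obtain u v where "d = chi st z u" "d' = chi st z v" using h3 unfolding chi_set_def by blast
    hence "map_inf opl st d d' = chi st z (mv_inf opl st u v)"
      unfolding map_inf_def chi_def by (auto simp: M.inf_idem)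
    thus ?thesis unfolding chi_set_def by blast
  qed
  have 4: "d \<in> chi_set st z" if "d \<in> odot_sup_derivations opl st" "der_le opl st z (chi st z u) d" for u d
  proof -
    have "d = chi st z (d (mv_one st z))"
    proof
      fix x show "d x = chi st z (d (mv_one st z)) x"
      proof (cases "x = mv_one st z")
        case True thus ?thesis by (simp add: chi_def)
      next
        case False
        have "mv_le opl st z x (d x)" using that(2) False unfolding der_le_def chi_def by metis
        moreover have "mv_le opl st z (d x) x" using M.der_le_self[OF that(1)] .
        ultimately show ?thesis using False M.antisym by (simp add: chi_def)
      qed
    qed
    thus ?thesis unfolding chi_set_def by blast
  qed
  show ?thesis using 1 2 3 4 by blast
qed

end
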